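(* Let $\beta\ge0$ and $\rho\in(0,1]$. For every $N_1,N_2\in\mathbb N$ and every $\omega$, \[ \log\tilde{\mathcal Z}_{N_1+N_2,\omega}(\rho)\ \ge\ \log\tilde{\mathcal Z}_{N_1,\omega}(\rho)+\log\tilde{\mathcal Z}_{N_2,\theta^{N_1}\omega}(\rho), \] where $(\theta\omega)_n=\omega_{n+1}$ (with the convention $\log0=-\infty$).
   Context: Let $\tau=(\tau_j)_{j\ge0}$ be a renewal process with $\tau_0=0$ and i.i.d. increments with values in $\mathbb N$, law $\mathbf P$, expectation $\mathbf E$; $K(n)=\mathbf P(\tau_1=n)>0$ for all $n$, $K(n)\sim C_Kn^{-(1+\alpha)}$, $\alpha>0$, $C_K>0$. $\delta_n=\mathbf 1_{n\in\{\tau_0,\tau_1,\dots\}}$. Let $\omega=(\omega_n)_{n\ge1}$ be a real sequence (in the paper, i.i.d. with law $\mathbb P$, independent of $\tau$). For $N\in\mathbb N$, $m\in\{0,\dots,N\}$ let $\mathcal Z_{N,m,\omega,\beta}=\mathbf E[\exp(\beta\sum_{j=1}^N\omega_j\delta_j)\mathbf 1_{\tau_m=N}]$ (which is $0$ if $m=0$), and for $\rho\in(0,1]$ let $\tilde{\mathcal Z}_{N,\omega}(\rho):=\min_{m\in\{\lfloor\rho N\rfloor,\lceil\rho N\rceil\}}\mathcal Z_{N,m,\omega,\beta}$. *)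

theory Defs
  imports "HOL-Analysis.Analysis" "HOL-Library.Landau_Symbols"
begin

text \<open>Renewal process: increments i.i.d. with law K on the positive integers.
  The event tau_m = N depends only on the first m increments l_1,...,l_m
  (tau_i = l_1 + ... + l_i), and on this event the renewal points in {1..N}
  are exactly tau_1,...,tau_m. Hence the expectation defining the constrained
  partition function is the finite sum below over increment vectors
  (lists of length m, entries >= 1, summing to N), weighted by the
  product of K (the law of the first m increments).\<close>

definition renewal_kernel :: "(nat \<Rightarrow> real) \<Rightarrow> real \<Rightarrow> real \<Rightarrow> bool" where
  "renewal_kernel K \<alpha> C\<^sub>K \<longleftrightarrow>
     K 0 = 0 \<and> (\<forall>n\<ge>1. K n > 0) \<and> (K sums 1) \<and> \<alpha> > 0 \<and> C\<^sub>K > 0 \<and>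
     (\<lambda>n. K n) \<sim>[at_top] (\<lambda>n. C\<^sub>K * real n powr (-(1 + \<alpha>)))"

definition incr_vectors :: "nat \<Rightarrow> nat \<Rightarrow> nat list set" where
  "incr_vectors N m = {ls. length ls = m \<and> (\<forall>l\<in>set ls. 1 \<le> l) \<and> sum_list ls = N}"

text \<open>Z_{N,m,omega,beta} = E[exp(beta * sum_{j=1}^N omega_j delta_j) 1_{tau_m = N}].\<close>
definition Zc :: "(nat \<Rightarrow> real) \<Rightarrow> real \<Rightarrow> (nat \<Rightarrow> real) \<Rightarrow> nat \<Rightarrow> nat \<Rightarrow> real" where
  "Zc K \<beta> \<omega> N m =
     (\<Sum>ls\<in>incr_vectors N m.
        (\<Prod>i<m. K (ls ! i)) * exp (\<beta> * (\<Sum>i=1..m. \<omega> (sum_list (take i ls)))))"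

definition Ztilde :: "(nat \<Rightarrow> real) \<Rightarrow> real \<Rightarrow> (nat \<Rightarrow> real) \<Rightarrow> real \<Rightarrow> nat \<Rightarrow> real" where
  "Ztilde K \<beta> \<omega> \<rho> N =
     min (Zc K \<beta> \<omega> N (nat \<lfloor>\<rho> * real N\<rfloor>)) (Zc K \<beta> \<omega> N (nat \<lceil>\<rho> * real N\<rceil>))"

definition shift :: "nat \<Rightarrow> (nat \<Rightarrow> real) \<Rightarrow> nat \<Rightarrow> real" where
  "shift k \<omega> = (\<lambda>n. \<omega> (n + k))"

definition elog :: "real \<Rightarrow> ereal" where
  "elog x = (if x = 0 then -\<infinity> else ereal (ln x))"

end

theory Submission
  imports Defs
begin

lemma incr_fin: "finite (incr_vectors N m)"
proof -
  have "incr_vectors N m \<subseteq> {ls. set ls \<subseteq> {0..N} \<and> length ls = m}"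
    unfolding incr_vectors_def using member_le_sum_list by fastforce
  moreover have "finite {ls. set ls \<subseteq> {0..N} \<and> length ls = m}"
    by (rule finite_lists_length_eq) simp
  ultimately show ?thesis by (rule finite_subset)
qed

lemma Zc_nonneg:
  assumes "\<And>n. K n \<ge> 0"
  shows "Zc K \<beta> \<omega> N m \<ge> 0"
  unfolding Zc_def
  by (intro sum_nonneg mult_nonneg_nonneg prod_nonneg) (auto simp: assms)

lemma prod_nth_list: "(\<Prod>i<length xs. f (xs ! i)) = prod_list (map f xs)"
  by (induction xs) (auto simp: prod.lessThan_Suc_shift simp del: prod.lessThan_Suc)

lemma concat_term:
  assumes a: "length a = m1" and b: "length b = m2" and sa: "sum_list a = N1"
  shows "((\<Prod>i<m1. K (a ! i)) * exp (\<beta> * (\<Sum>i=1..m1. \<omega> (sum_list (take i a))))) *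
         ((\<Prod>i<m2. K (b ! i)) * exp (\<beta> * (\<Sum>i=1..m2. shift N1 \<omega> (sum_list (take i b)))))
       = (\<Prod>i<m1+m2. K ((a@b) ! i)) * exp (\<beta> * (\<Sum>i=1..m1+m2. \<omega> (sum_list (take i (a@b)))))"
proof -
  have P: "(\<Prod>i<m1+m2. K ((a@b) ! i)) = (\<Prod>i<m1. K (a ! i)) * (\<Prod>i<m2. K (b ! i))"
    using prod_nth_list[of K "a@b"] prod_nth_list[of K a] prod_nth_list[of K b] a b by simp
  have "(\<Sum>i=1..m1+m2. \<omega> (sum_list (take i (a@b)))) =
        (\<Sum>i=1..m1. \<omega> (sum_list (take i (a@b)))) + (\<Sum>i=m1+1..m1+m2. \<omega> (sum_list (take i (a@b))))"
    by (rule sum.ub_add_nat) simp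
  also have "(\<Sum>i=1..m1. \<omega> (sum_list (take i (a@b)))) = (\<Sum>i=1..m1. \<omega> (sum_list (take i a)))"
    by (rule sum.cong) (auto simp: a)
  also have "(\<Sum>i=m1+1..m1+m2. \<omega> (sum_list (take i (a@b)))) =
             (\<Sum>i=1..m2. \<omega> (sum_list (take (i+m1) (a@b))))"
    using sum.shift_bounds_cl_nat_ivl[of "\<lambda>i. \<omega> (sum_list (take i (a@b)))" 1 m1 m2]
    by (simp add: add.commute)
  also have "\<dots> = (\<Sum>i=1..m2. shift N1 \<omega> (sum_list (take i b)))"
    by (rule sum.cong) (auto simp: a sa shift_def add.commute)
  finally have S: "(\<Sum>i=1..m1+m2. \<omega> (sum_list (take i (a@b)))) =
     (\<Sum>i=1..m1. \<omega> (sum_list (take i a))) + (\<Sum>i=1..m2. shift N1 \<omega> (sum_list (take i b)))" .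
  show ?thesis unfolding P S by (simp add: distrib_left exp_add algebra_simps)
qed

lemma Zc_concat:
  assumes K: "\<And>n. K n \<ge> 0"
  shows "Zc K \<beta> \<omega> N1 m1 * Zc K \<beta> (shift N1 \<omega>) N2 m2 \<le> Zc K \<beta> \<omega> (N1+N2) (m1+m2)"
proof -
  define f where "f = (\<lambda>a. (\<Prod>i<m1. K (a ! i)) * exp (\<beta> * (\<Sum>i=1..m1. \<omega> (sum_list (take i a)))))"
  define g where "g = (\<lambda>b. (\<Prod>i<m2. K (b ! i)) * exp (\<beta> * (\<Sum>i=1..m2. shift N1 \<omega> (sum_list (take i b)))))"
  define F where "F = (\<lambda>c. (\<Prod>i<m1+m2. K (c ! i)) * exp (\<beta> * (\<Sum>i=1..m1+m2. \<omega> (sum_list (take i c)))))"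
  let ?A = "incr_vectors N1 m1" and ?B = "incr_vectors N2 m2" and ?C = "incr_vectors (N1+N2) (m1+m2)"
  let ?h = "\<lambda>(a::nat list, b::nat list). a @ b"
  have "Zc K \<beta> \<omega> N1 m1 * Zc K \<beta> (shift N1 \<omega>) N2 m2 = (\<Sum>a\<in>?A. f a) * (\<Sum>b\<in>?B. g b)"
    unfolding Zc_def f_def g_def by simp
  also have "\<dots> = (\<Sum>p\<in>?A \<times> ?B. f (fst p) * g (snd p))"
    by (simp add: sum_product sum.cartesian_product case_prod_beta)
  also have "\<dots> = (\<Sum>p\<in>?A \<times> ?B. F (?h p))"
  proof (rule sum.cong[OF refl])
    fix p assume p: "p \<in> ?A \<times> ?B"
    obtain a b where ab: "p = (a, b)" by (cases p)
    have "length a = m1" "length b = m2" "sum_list a = N1"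
      using p ab by (auto simp: incr_vectors_def)
    then show "f (fst p) * g (snd p) = F (?h p)"
      unfolding f_def g_def F_def ab using concat_term[of a m1 b m2 N1 K \<beta> \<omega>] by simp
  qed
  also have "\<dots> = (\<Sum>c\<in>?h ` (?A \<times> ?B). F c)"
  proof (rule sum.reindex[symmetric, unfolded comp_def])
    show "inj_on ?h (?A \<times> ?B)"
      by (auto simp: inj_on_def incr_vectors_def)
  qed
  also have "\<dots> \<le> (\<Sum>c\<in>?C. F c)"
  proof (rule sum_mono2[OF incr_fin])
    show "?h ` (?A \<times> ?B) \<subseteq> ?C" by (auto simp: incr_vectors_def)
    show "\<And>c. c \<in> ?C - ?h ` (?A \<times> ?B) \<Longrightarrow> 0 \<le> F c"
      unfolding F_def by (intro mult_nonneg_nonneg prod_nonneg) (auto simp: K)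
  qed
  also have "\<dots> = Zc K \<beta> \<omega> (N1+N2) (m1+m2)" unfolding Zc_def F_def by simp
  finally show ?thesis .
qed

lemma round_split:
  fixes x y :: real
  assumes "x \<ge> 0" "y \<ge> 0" "m = nat \<lfloor>x+y\<rfloor> \<or> m = nat \<lceil>x+y\<rceil>"
  shows "\<exists>m1 m2. (m1 = nat \<lfloor>x\<rfloor> \<or> m1 = nat \<lceil>x\<rceil>) \<and> (m2 = nat \<lfloor>y\<rfloor> \<or> m2 = nat \<lceil>y\<rceil>) \<and> m = m1 + m2"
proof -
  have c1: "\<lceil>x\<rceil> = \<lfloor>x\<rfloor> \<or> \<lceil>x\<rceil> = \<lfloor>x\<rfloor> + 1"
    using ceiling_diff_floor_le_1[of x] floor_le_ceiling[of x] by linarith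
  have c2: "\<lceil>y\<rceil> = \<lfloor>y\<rfloor> \<or> \<lceil>y\<rceil> = \<lfloor>y\<rfloor> + 1"
    using ceiling_diff_floor_le_1[of y] floor_le_ceiling[of y] by linarith
  have l: "\<lfloor>x\<rfloor> + \<lfloor>y\<rfloor> \<le> \<lfloor>x+y\<rfloor>" by (rule le_floor_add)
  have u: "\<lceil>x+y\<rceil> \<le> \<lceil>x\<rceil> + \<lceil>y\<rceil>" by (rule ceiling_add_le)
  have fc: "\<lfloor>x+y\<rfloor> \<le> \<lceil>x+y\<rceil>" by (rule floor_le_ceiling)
  have p: "\<lfloor>x\<rfloor> \<ge> 0" "\<lfloor>y\<rfloor> \<ge> 0" using assms by auto
  obtain k where k: "int m = k" "\<lfloor>x\<rfloor> + \<lfloor>y\<rfloor> \<le> k" "k \<le> \<lceil>x\<rceil> + \<lceil>y\<rceil>"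
    using assms(3) l u fc p by fastforce
  have nx: "int (nat \<lfloor>x\<rfloor>) = \<lfloor>x\<rfloor>" "int (nat \<lceil>x\<rceil>) = \<lceil>x\<rceil>"
    "int (nat \<lfloor>y\<rfloor>) = \<lfloor>y\<rfloor>" "int (nat \<lceil>y\<rceil>) = \<lceil>y\<rceil>"
    using p floor_le_ceiling[of x] floor_le_ceiling[of y] by auto
  consider "k = \<lfloor>x\<rfloor> + \<lfloor>y\<rfloor>" | "k = \<lceil>x\<rceil> + \<lfloor>y\<rfloor>" | "k = \<lfloor>x\<rfloor> + \<lceil>y\<rceil>"
    | "k = \<lceil>x\<rceil> + \<lceil>y\<rceil>"
    using c1 c2 k by linarith
  then show ?thesis
  proof cases
    case 1 then show ?thesis using k nx
      by (intro exI[of _ "nat \<lfloor>x\<rfloor>"] exI[of _ "nat \<lfloor>y\<rfloor>"]) linarith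
  next
    case 2 then show ?thesis using k nx
      by (intro exI[of _ "nat \<lceil>x\<rceil>"] exI[of _ "nat \<lfloor>y\<rfloor>"]) linarith
  next
    case 3 then show ?thesis using k nx
      by (intro exI[of _ "nat \<lfloor>x\<rfloor>"] exI[of _ "nat \<lceil>y\<rceil>"]) linarith
  next
    case 4 then show ?thesis using k nx
      by (intro exI[of _ "nat \<lceil>x\<rceil>"] exI[of _ "nat \<lceil>y\<rceil>"]) linarith
  qed
qed

theorem lemma6p1:
  fixes K :: "nat \<Rightarrow> real" and \<alpha> C\<^sub>K \<beta> \<rho> :: real
    and \<omega> :: "nat \<Rightarrow> real" and N\<^sub>1 N\<^sub>2 :: nat
  assumes "renewal_kernel K \<alpha> C\<^sub>K"
    and "\<beta> \<ge> 0" and "0 < \<rho>" and "\<rho> \<le> 1"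
    and "N\<^sub>1 \<ge> 1" and "N\<^sub>2 \<ge> 1"
  shows "elog (Ztilde K \<beta> \<omega> \<rho> (N\<^sub>1 + N\<^sub>2))
           \<ge> elog (Ztilde K \<beta> \<omega> \<rho> N\<^sub>1) + elog (Ztilde K \<beta> (shift N\<^sub>1 \<omega>) \<rho> N\<^sub>2)"
proof -
  have K: "\<And>n. K n \<ge> 0"
  proof -
    fix n show "K n \<ge> 0"
      using assms(1) unfolding renewal_kernel_def
      by (cases "n = 0") (auto intro: less_imp_le)
  qed
  define T1 where "T1 = Ztilde K \<beta> \<omega> \<rho> N\<^sub>1"
  define T2 where "T2 = Ztilde K \<beta> (shift N\<^sub>1 \<omega>) \<rho> N\<^sub>2"
  define T where "T = Ztilde K \<beta> \<omega> \<rho> (N\<^sub>1 + N\<^sub>2)"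
  have T1: "T1 \<ge> 0" unfolding T1_def Ztilde_def using Zc_nonneg[OF K] by simp
  have T2: "T2 \<ge> 0" unfolding T2_def Ztilde_def using Zc_nonneg[OF K] by simp
  let ?x = "\<rho> * real N\<^sub>1" and ?y = "\<rho> * real N\<^sub>2"
  have xy: "\<rho> * real (N\<^sub>1 + N\<^sub>2) = ?x + ?y" by (simp add: distrib_left)
  have key: "T1 * T2 \<le> Zc K \<beta> \<omega> (N\<^sub>1 + N\<^sub>2) m"
    if m: "m = nat \<lfloor>?x + ?y\<rfloor> \<or> m = nat \<lceil>?x + ?y\<rceil>" for m
  proof -
    obtain m1 m2 where mm: "m1 = nat \<lfloor>?x\<rfloor> \<or> m1 = nat \<lceil>?x\<rceil>"
      "m2 = nat \<lfloor>?y\<rfloor> \<or> m2 = nat \<lceil>?y\<rceil>" "m = m1 + m2"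
      using round_split[OF _ _ m] assms(3) by fastforce
    have a: "T1 \<le> Zc K \<beta> \<omega> N\<^sub>1 m1" using mm(1) unfolding T1_def Ztilde_def by auto
    have b: "T2 \<le> Zc K \<beta> (shift N\<^sub>1 \<omega>) N\<^sub>2 m2" using mm(2) unfolding T2_def Ztilde_def by auto
    have "T1 * T2 \<le> Zc K \<beta> \<omega> N\<^sub>1 m1 * Zc K \<beta> (shift N\<^sub>1 \<omega>) N\<^sub>2 m2"
      by (rule mult_mono[OF a b Zc_nonneg[OF K] T2])
    also have "\<dots> \<le> Zc K \<beta> \<omega> (N\<^sub>1 + N\<^sub>2) m" using Zc_concat[OF K] mm(3) by simp
    finally show ?thesis .
  qed
  have TT: "T1 * T2 \<le> T" unfolding T_def Ztilde_def xy using key by simp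
  show ?thesis
  proof (cases "T1 = 0 \<or> T2 = 0")
    case True then show ?thesis unfolding T1_def[symmetric] T2_def[symmetric] elog_def by auto
  next
    case False
    then have p: "T1 > 0" "T2 > 0" using T1 T2 by auto
    then have "T > 0" using TT by (metis mult_pos_pos order_less_le_trans)
    have "ln T1 + ln T2 \<le> ln T" using p \<open>T > 0\<close> TT ln_mult[of T1 T2] ln_le_cancel_iff[of "T1*T2" T] by simp
    then show ?thesis using p \<open>T > 0\<close>
      unfolding T1_def[symmetric] T2_def[symmetric] T_def[symmetric] elog_def by simp
  qed
qed

end
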